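(* Let $\alpha\geq 1$ be a real number. If a connected $(n,m)$-graph $G$ has maximum value of $Pl_\alpha$ among all connected $(n,m)$-graphs, then the maximum vertex degree in $G$ is $n-1$.
   Context: All graphs are finite, simple, undirected and connected; an $(n,m)$-graph has $n$ vertices and $m$ edges. The general Platt index is $Pl_\alpha(G)=\sum_{uv\in E(G)}(d_u+d_v-2)^\alpha$, where $d_u$ is the degree of vertex $u$. *)

theory Defs
  imports Complex_Main
begin

definition simple_graph :: "'a set \<Rightarrow> 'a set set \<Rightarrow> bool" where
  "simple_graph V E \<longleftrightarrow> finite V \<and> (\<forall>e\<in>E. e \<subseteq> V \<and> card e = 2)"

definition adj :: "'a set set \<Rightarrow> 'a \<Rightarrow> 'a \<Rightarrow> bool" where
  "adj E u v \<longleftrightarrow> {u, v} \<in> E"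

definition connected_graph :: "'a set \<Rightarrow> 'a set set \<Rightarrow> bool" where
  "connected_graph V E \<longleftrightarrow> simple_graph V E \<and> V \<noteq> {} \<and>
     (\<forall>u\<in>V. \<forall>v\<in>V. (adj E)\<^sup>*\<^sup>* u v)"

definition degree :: "'a set set \<Rightarrow> 'a \<Rightarrow> nat" where
  "degree E v = card {e\<in>E. v \<in> e}"

definition platt :: "real \<Rightarrow> 'a set set \<Rightarrow> real" where
  "platt \<alpha> E = (\<Sum>e\<in>E. (real (\<Sum>v\<in>e. degree E v) - 2) powr \<alpha>)"

definition max_degree :: "'a set \<Rightarrow> 'a set set \<Rightarrow> nat" where
  "max_degree V E = Max (degree E ` V)"

end

theory Submission
  imports Defs
begin

lemma cvx:
  fixes p q r s a :: real
  assumes "a \<ge> 1" "0 < p" "p < q" "q \<le> r" "r + q = p + s"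
  shows "q powr a + r powr a \<le> p powr a + s powr a"
proof -
  define f' where "f' z = a * z powr (a - 1)" for z
  have D: "DERIV (\<lambda>z. z powr a) x :> f' x" if "0 < x" for x
    unfolding f'_def using has_real_derivative_powr[OF that] .
  have rs: "r < s" using assms by linarith
  obtain z1 where z1: "p < z1" "z1 < q" "q powr a - p powr a = (q - p) * f' z1"
    using MVT2[OF assms(3), of "\<lambda>z. z powr a" f'] D assms(2) by force
  obtain z2 where z2: "r < z2" "z2 < s" "s powr a - r powr a = (s - r) * f' z2"
    using MVT2[OF rs, of "\<lambda>z. z powr a" f'] D assms by force
  have "z1 powr (a - 1) \<le> z2 powr (a - 1)"
    using z1 z2 assms by (intro powr_mono2) auto
  then have "f' z1 \<le> f' z2" using assms by (simp add: f'_def)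
  moreover have "q - p = s - r" "q - p > 0" using assms by auto
  ultimately have "(q - p) * f' z1 \<le> (s - r) * f' z2" by simp
  then show ?thesis using z1 z2 by linarith
qed

definition nbr :: "'a set set \<Rightarrow> 'a \<Rightarrow> 'a set" where
  "nbr E x = {y. {x, y} \<in> E}"

lemma nbr_sym: "y \<in> nbr E x \<longleftrightarrow> x \<in> nbr E y"
  by (simp add: nbr_def insert_commute)

lemma edge_form:
  assumes "simple_graph V E" "e \<in> E"
  shows "\<exists>a b. e = {a, b} \<and> a \<noteq> b \<and> a \<in> V \<and> b \<in> V"
proof -
  have "card e = 2" "e \<subseteq> V" using assms by (auto simp: simple_graph_def)
  then show ?thesis by (auto simp: card_2_iff)
qed

lemma nbr_sub:
  assumes "simple_graph V E"
  shows "nbr E x \<subseteq> V - {x}"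
proof
  fix y assume "y \<in> nbr E x"
  then have "{x, y} \<in> E" by (simp add: nbr_def)
  then have "card {x, y} = 2" "{x, y} \<subseteq> V" using assms by (auto simp: simple_graph_def)
  then show "y \<in> V - {x}" by (cases "x = y") auto
qed

lemma finite_nbr: "simple_graph V E \<Longrightarrow> finite (nbr E x)"
  using nbr_sub by (metis finite_Diff finite_subset simple_graph_def)

lemma finite_E: "simple_graph V E \<Longrightarrow> finite E"
  unfolding simple_graph_def by (meson Pow_iff finite_Pow_iff finite_subset subsetI)

lemma deg_nbr:
  assumes "simple_graph V E"
  shows "degree E x = card (nbr E x)"
proof -
  have "{e\<in>E. x \<in> e} = (\<lambda>y. {x, y}) ` nbr E x"
  proof (rule set_eqI, rule iffI)
    fix e assume "e \<in> {e\<in>E. x \<in> e}"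
    then obtain a b where e: "e = {a, b}" "a \<noteq> b" "e \<in> E" "x \<in> e"
      using edge_form[OF assms] by blast
    show "e \<in> (\<lambda>y. {x, y}) ` nbr E x"
    proof (cases "x = a")
      case True then show ?thesis using e by (auto simp: nbr_def)
    next
      case False then have "x = b" using e by auto
      then show ?thesis using e by (auto simp: nbr_def insert_commute intro!: image_eqI[of _ _ a])
    qed
  qed (auto simp: nbr_def)
  moreover have "inj_on (\<lambda>y. {x, y}) (nbr E x)"
    by (auto simp: inj_on_def doubleton_eq_iff)
  ultimately show ?thesis unfolding degree_def by (simp add: card_image)
qed

lemma deg_le:
  assumes "simple_graph V E" "x \<in> V"
  shows "degree E x \<le> card V - 1"
proof -
  have "card (nbr E x) \<le> card (V - {x})"
    using assms nbr_sub[OF assms(1)] by (intro card_mono) (auto simp: simple_graph_def)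
  moreover have "finite V" using assms(1) by (simp add: simple_graph_def)
  ultimately show ?thesis using assms(2) by (simp add: deg_nbr[OF assms(1)])
qed

lemma edge_sum:
  assumes "a \<noteq> b"
  shows "(\<Sum>x\<in>{a,b}. f x) = f a + (f b :: nat)"
  using assms by simp

lemma path_lemma:
  assumes "(adj E)\<^sup>*\<^sup>* u b"
  shows "b \<in> insert u (nbr E u) \<or> (\<exists>v w. v \<in> nbr E u \<and> w \<in> nbr E v \<and> w \<notin> insert u (nbr E u))"
  using assms
proof (induction rule: rtranclp_induct)
  case base then show ?case by simp
next
  case (step b c)
  have bc: "c \<in> nbr E b" using step(2) by (simp add: adj_def nbr_def)
  show ?case
  proof (cases "c \<in> insert u (nbr E u)")
    case False
    show ?thesis
    proof (cases "b = u")
      case True then show ?thesis using False bc by simp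
    next
      case bu: False
      show ?thesis using step(3)
      proof
        assume "b \<in> insert u (nbr E u)"
        then have "b \<in> nbr E u" using bu by simp
        then show ?thesis using bc False by blast
      qed simp
    qed
  qed simp
qed

lemma dbl_img: "{x, y} \<in> (\<lambda>t. {a, t}) ` Y \<longleftrightarrow> (x = a \<and> y \<in> Y) \<or> (y = a \<and> x \<in> Y)"
proof
  assume "{x, y} \<in> (\<lambda>t. {a, t}) ` Y"
  then obtain t where "t \<in> Y" "{x, y} = {a, t}" by blast
  then show "(x = a \<and> y \<in> Y) \<or> (y = a \<and> x \<in> Y)" unfolding doubleton_eq_iff by blast
next
  assume "(x = a \<and> y \<in> Y) \<or> (y = a \<and> x \<in> Y)"
  then show "{x, y} \<in> (\<lambda>t. {a, t}) ` Y" by (auto simp: insert_commute)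
qed

lemma inj_dbl: "inj (\<lambda>z. {u, z})"
  by (auto simp: inj_on_def doubleton_eq_iff)

lemma nbr_deg_pos:
  assumes "simple_graph V E" "y \<in> nbr E x"
  shows "degree E x \<ge> 1"
  using assms deg_nbr[OF assms(1)] finite_nbr[OF assms(1)]
  by (metis One_nat_def Suc_leI card_gt_0_iff empty_iff)

locale kel =
  fixes V :: "'a set" and E :: "'a set set" and u v :: 'a and Y :: "'a set" and \<alpha> :: real
  assumes sg: "simple_graph V E" and uV: "u \<in> V" and uv: "v \<in> nbr E u"
    and Ydef: "Y = nbr E v - insert u (nbr E u)" and Yne: "Y \<noteq> {}"
    and dvu: "degree E v \<le> degree E u" and al: "\<alpha> \<ge> 1"
begin

definition E2 where "E2 = (E - (\<lambda>y. {v, y}) ` Y) \<union> (\<lambda>y. {u, y}) ` Y"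

lemma basic:
  shows "Y \<subseteq> nbr E v" "u \<notin> Y" "v \<notin> Y" "Y \<inter> nbr E u = {}" "finite Y" "u \<noteq> v" "v \<in> V"
    "Y \<subseteq> V" "u \<in> nbr E v"
proof -
  show "Y \<subseteq> nbr E v" "u \<notin> Y" "Y \<inter> nbr E u = {}" using Ydef by auto
  show "v \<notin> Y" using Ydef nbr_sub[OF sg, of v] by auto
  show "finite Y" using Ydef finite_nbr[OF sg] by simp
  show "u \<noteq> v" "v \<in> V" using uv nbr_sub[OF sg, of u] by auto
  show "Y \<subseteq> V" using Ydef nbr_sub[OF sg, of v] by auto
  show "u \<in> nbr E v" using uv by (rule nbr_sym[THEN iffD1])
qed

lemma mem_E2: "{x, y} \<in> E2 \<longleftrightarrow>
   ({x, y} \<in> E \<and> \<not> ((x = v \<and> y \<in> Y) \<or> (y = v \<and> x \<in> Y))) \<or> (x = u \<and> y \<in> Y) \<or> (y = u \<and> x \<in> Y)"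
  unfolding E2_def Un_iff Diff_iff dbl_img by blast

lemma sg2: "simple_graph V E2"
  unfolding simple_graph_def
proof (rule conjI)
  show "finite V" using sg by (simp add: simple_graph_def)
  show "\<forall>e\<in>E2. e \<subseteq> V \<and> card e = 2"
  proof
  fix e assume "e \<in> E2"
  then consider "e \<in> E" | y where "y \<in> Y" "e = {u, y}" unfolding E2_def by blast
  then show "e \<subseteq> V \<and> card e = 2"
  proof cases
    case 1 then show ?thesis using sg by (simp add: simple_graph_def)
  next
    case 2
    then have "u \<noteq> y" using basic(2) by blast
    then show ?thesis using 2 basic(8) uV by auto
  qed
  qed
qed

lemma mem_nbr2: "y \<in> nbr E2 x \<longleftrightarrow>
   (y \<in> nbr E x \<and> \<not> ((x = v \<and> y \<in> Y) \<or> (y = v \<and> x \<in> Y))) \<or> (x = u \<and> y \<in> Y) \<or> (y = u \<and> x \<in> Y)"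
  unfolding nbr_def[of E2] mem_E2 by (simp add: nbr_def)

lemma nbr_E2: "nbr E2 x = (if x = u then nbr E u \<union> Y else if x = v then nbr E v - Y
    else if x \<in> Y then insert u (nbr E x - {v}) else nbr E x)"
proof -
  have uv': "u \<noteq> v" "u \<notin> Y" "v \<notin> Y" using basic by auto
  show ?thesis
  proof (cases "x = u")
    case True then show ?thesis using uv' unfolding set_eq_iff mem_nbr2 by auto
  next
    case xu: False
    show ?thesis
    proof (cases "x = v")
      case True then show ?thesis using uv' xu unfolding set_eq_iff mem_nbr2 by auto
    next
      case xv: False
      show ?thesis
      proof (cases "x \<in> Y")
        case True
        then show ?thesis using xu xv unfolding set_eq_iff mem_nbr2 by auto
      next
        case False
        then show ?thesis using xu xv unfolding set_eq_iff mem_nbr2 by auto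
      qed
    qed
  qed
qed

definition k where "k = card Y"

lemma deg2: "real (degree E2 x) = real (degree E x) + (if x = u then real k else 0) - (if x = v then real k else 0)"
proof -
  have fu: "finite (nbr E z)" for z using finite_nbr[OF sg] .
  note b = basic
  show ?thesis
  proof (cases "x = u")
    case True
    have "nbr E u \<inter> Y = {}" using b(4) by blast
    then have "card (nbr E u \<union> Y) = card (nbr E u) + card Y" using fu b(5) by (rule card_Un_disjoint[rotated 2])
    then show ?thesis using True b(6) unfolding deg_nbr[OF sg2] deg_nbr[OF sg] nbr_E2 k_def
      by simp
  next
    case xu: False
    show ?thesis
    proof (cases "x = v")
      case True
      have "card (nbr E v - Y) = card (nbr E v) - card Y" using b(1) b(5) by (rule card_Diff_subset[rotated])
      moreover have "card Y \<le> card (nbr E v)" using b(1) fu by (intro card_mono) auto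
      ultimately show ?thesis using True xu unfolding deg_nbr[OF sg2] deg_nbr[OF sg] nbr_E2 k_def
        by (simp add: of_nat_diff)
    next
      case xv: False
      show ?thesis
      proof (cases "x \<in> Y")
        case True
        have "x \<in> nbr E v" using True b(1) by blast
        then have v1: "v \<in> nbr E x" by (rule nbr_sym[THEN iffD1])
        have "x \<notin> nbr E u" using True b(4) by blast
        then have u1: "u \<notin> nbr E x" using nbr_sym[of u E x] by simp
        have c1: "card (nbr E x - {v}) = card (nbr E x) - 1" using v1 by (rule card_Diff_singleton)
        have c2: "card (insert u (nbr E x - {v})) = Suc (card (nbr E x - {v}))"
          using u1 fu by simp
        have c3: "card (nbr E x) \<ge> 1" using v1 fu[of x] by (metis One_nat_def Suc_leI card_gt_0_iff empty_iff)
        have "card (insert u (nbr E x - {v})) = card (nbr E x)" using c1 c2 c3 by simp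
        then show ?thesis using True xu xv unfolding deg_nbr[OF sg2] deg_nbr[OF sg] nbr_E2 by simp
      next
        case False
        then show ?thesis using xu xv unfolding deg_nbr[OF sg2] deg_nbr[OF sg] nbr_E2 by simp
      qed
    qed
  qed
qed

lemma sigma2:
  assumes "finite e"
  shows "real (\<Sum>x\<in>e. degree E2 x) = real (\<Sum>x\<in>e. degree E x) + (if u \<in> e then real k else 0) - (if v \<in> e then real k else 0)"
proof -
  have "real (\<Sum>x\<in>e. degree E2 x) = (\<Sum>x\<in>e. real (degree E x)) + (\<Sum>x\<in>e. if x = u then real k else 0) - (\<Sum>x\<in>e. if x = v then real k else 0)"
    unfolding of_nat_sum deg2 by (simp only: sum.distrib sum_subtractf)
  also have "\<dots> = real (\<Sum>x\<in>e. degree E x) + (if u \<in> e then real k else 0) - (if v \<in> e then real k else 0)"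
    unfolding sum.delta[OF assms, of u "\<lambda>_. real k"] sum.delta[OF assms, of v "\<lambda>_. real k"]
    by (simp only: of_nat_sum)
  finally show ?thesis .
qed


lemma card_E2: "card E2 = card E"
proof -
  have fE: "finite E" using finite_E[OF sg] .
  have RE: "(\<lambda>y. {v, y}) ` Y \<subseteq> E" using basic(1) by (auto simp: nbr_def)
  have disj: "(E - (\<lambda>y. {v, y}) ` Y) \<inter> (\<lambda>y. {u, y}) ` Y = {}"
    using basic(4) by (auto simp: nbr_def)
  have c1: "card ((\<lambda>y. {v, y}) ` Y) = card Y" by (rule card_image) (rule inj_on_subset[OF inj_dbl], simp)
  have c2: "card ((\<lambda>y. {u, y}) ` Y) = card Y" by (rule card_image) (rule inj_on_subset[OF inj_dbl], simp)
  have "card E2 = card (E - (\<lambda>y. {v, y}) ` Y) + card ((\<lambda>y. {u, y}) ` Y)"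
    unfolding E2_def using fE basic(5) disj by (intro card_Un_disjoint) auto
  also have "\<dots> = card E - card Y + card Y"
    using card_Diff_subset[OF finite_subset[OF RE fE] RE] c1 c2 by simp
  also have "\<dots> = card E"
  proof -
    have "card ((\<lambda>y. {v, y}) ` Y) \<le> card E" using RE fE by (intro card_mono) auto
    then show ?thesis using c1 by simp
  qed
  finally show ?thesis .
qed

lemma step_E2:
  assumes "adj E a b" shows "(adj E2)\<^sup>*\<^sup>* a b"
proof (cases "{a, b} \<in> E2")
  case True then show ?thesis by (intro r_into_rtranclp) (simp add: adj_def)
next
  case False
  note b = basic
  have ab: "{a, b} \<in> E" using assms by (simp add: adj_def)
  from False ab have "(a = v \<and> b \<in> Y) \<or> (b = v \<and> a \<in> Y)" unfolding mem_E2 by blast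
  moreover have "adj E2 u v" "adj E2 v u" using b uv unfolding adj_def mem_E2 by (auto simp: nbr_def insert_commute)
  moreover have "adj E2 u y" "adj E2 y u" if "y \<in> Y" for y using that unfolding adj_def mem_E2 by auto
  ultimately show ?thesis
    by (metis converse_rtranclp_into_rtranclp r_into_rtranclp)
qed

lemma conn_E2:
  assumes "(adj E)\<^sup>*\<^sup>* a b" shows "(adj E2)\<^sup>*\<^sup>* a b"
  using assms
proof (induction rule: rtranclp_induct)
  case base then show ?case by simp
next
  case (step b c) then show ?case using step_E2 by (meson rtranclp_trans)
qed


lemma platt_E2: "platt \<alpha> E < platt \<alpha> E2"
proof -
  note b = basic
  define d where "d x = real (degree E x)" for x
  define g where "g e = (real (\<Sum>x\<in>e. degree E x) - 2) powr \<alpha>" for e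
  define h where "h e = (real (\<Sum>x\<in>e. degree E x) + (if u \<in> e then real k else 0)
     - (if v \<in> e then real k else 0) - 2) powr \<alpha>" for e
  have a0: "0 < \<alpha>" using al by simp
  have fE: "finite E" using finite_E[OF sg] .
  have fE2: "finite E2" using finite_E[OF sg2] .
  have Pl1: "platt \<alpha> E = sum g E" unfolding platt_def g_def ..
  have Pl2: "platt \<alpha> E2 = sum h E2" unfolding platt_def h_def
  proof (rule sum.cong)
    fix e assume "e \<in> E2"
    then have "card e = 2" using sg2 by (simp add: simple_graph_def)
    then have "finite e" by (intro card_ge_0_finite) simp
    then show "(real (\<Sum>x\<in>e. degree E2 x) - 2) powr \<alpha> = (real (\<Sum>x\<in>e. degree E x) + (if u \<in> e then real k else 0)
     - (if v \<in> e then real k else 0) - 2) powr \<alpha>" by (subst sigma2[OF \<open>finite e\<close>]) (rule refl)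
  qed simp
  define R where "R = (\<lambda>y. {v, y}) ` Y"
  define R' where "R' = (\<lambda>y. {u, y}) ` Y"
  define C where "C = nbr E u \<inter> nbr E v"
  define P1 where "P1 = (\<lambda>z. {u, z}) ` C"
  define P2 where "P2 = (\<lambda>z. {v, z}) ` C"
  define S where "S = E - R"
  have E2S: "E2 = S \<union> R'" unfolding E2_def S_def R_def R'_def ..
  have RE: "R \<subseteq> E" using b(1) by (auto simp: nbr_def R_def)
  have fC: "finite C" using finite_nbr[OF sg] by (simp add: C_def)
  have fS: "finite S" using fE by (simp add: S_def)
  have fR': "finite R'" using b(5) by (simp add: R'_def)
  have SR': "S \<inter> R' = {}" using b(4) by (auto simp: nbr_def S_def R'_def)
  have P1S: "P1 \<subseteq> S"
  proof
    fix e assume "e \<in> P1"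
    then obtain z where z: "z \<in> C" "e = {u, z}" by (auto simp: P1_def)
    then have "e \<in> E" by (simp add: C_def nbr_def)
    moreover have "e \<notin> R" using z b(2) b(4) by (auto simp: R_def C_def doubleton_eq_iff)
    ultimately show "e \<in> S" by (simp add: S_def)
  qed
  have P2S: "P2 \<subseteq> S"
  proof
    fix e assume "e \<in> P2"
    then obtain z where z: "z \<in> C" "e = {v, z}" by (auto simp: P2_def)
    then have "e \<in> E" by (simp add: C_def nbr_def)
    moreover have "e \<notin> R" using z b(3) b(4) by (auto simp: R_def C_def doubleton_eq_iff)
    ultimately show "e \<in> S" by (simp add: S_def)
  qed
  have P12: "P1 \<inter> P2 = {}"
  proof -
    have "u \<notin> nbr E u" using nbr_sub[OF sg, of u] by auto
    then show ?thesis using b(6) by (auto simp: P1_def P2_def C_def doubleton_eq_iff)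
  qed
  have kpos: "real k \<ge> 1" using b(5) Yne by (simp add: k_def Suc_le_eq card_gt_0_iff)
  have kv: "real k \<le> d v - 1"
  proof -
    have "Y \<subset> nbr E v" using b(1) b(2) b(9) by blast
    then have "card Y < card (nbr E v)" using finite_nbr[OF sg] by (intro psubset_card_mono) auto
    then show ?thesis by (simp add: k_def d_def deg_nbr[OF sg])
  qed
  have dvu': "d v \<le> d u" using dvu by (simp add: d_def)
  have dpos: "d x \<ge> 1" if "y \<in> nbr E x" for x y
    using nbr_deg_pos[OF sg that] by (simp add: d_def)
  have sum2: "real (\<Sum>x\<in>{a, c}. degree E x) = d a + d c" if "a \<noteq> c" for a c
    using that by (simp add: d_def)
  have I3: "g {v, y} < h {u, y}" if "y \<in> Y" for y
  proof -
    have yv: "y \<noteq> v" "y \<noteq> u" using that b(2) b(3) by auto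
    have "y \<in> nbr E v" using that b(1) by blast
    then have "v \<in> nbr E y" by (rule nbr_sym[THEN iffD1])
    then have "d y \<ge> 1" by (rule dpos)
    moreover have "d v \<ge> 1" using dpos[OF b(9)] .
    ultimately show ?thesis unfolding g_def h_def using yv b(6) kpos dvu' a0
      by (simp add: sum2 insert_commute) (intro powr_less_mono2, auto simp: d_def)
  qed
  have I2: "g {u, z} + g {v, z} \<le> h {u, z} + h {v, z}" if "z \<in> C" for z
  proof -
    have zz: "z \<noteq> u" "z \<noteq> v" using that nbr_sub[OF sg] by (auto simp: C_def)
    have "z \<in> nbr E u" "z \<in> nbr E v" using that by (auto simp: C_def)
    then have "{u, v} \<subseteq> nbr E z" using nbr_sym[of z E u] nbr_sym[of z E v] by simp
    then have "card {u, v} \<le> card (nbr E z)" using finite_nbr[OF sg] by (intro card_mono) auto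
    then have dz: "d z \<ge> 2" using b(6) by (simp add: d_def deg_nbr[OF sg])
    have "(d v + d z - 2) powr \<alpha> + (d u + d z - 2) powr \<alpha> \<le>
          (d v + d z - 2 - real k) powr \<alpha> + (d u + d z - 2 + real k) powr \<alpha>"
      by (rule cvx) (use al kpos kv dz dvu' in auto)
    moreover have "g {u, z} = (d u + d z - 2) powr \<alpha>" "g {v, z} = (d v + d z - 2) powr \<alpha>"
      "h {u, z} = (d u + d z - 2 + real k) powr \<alpha>" "h {v, z} = (d v + d z - 2 - real k) powr \<alpha>"
      unfolding g_def h_def using zz b(6) by (simp_all add: d_def algebra_simps)
    ultimately show ?thesis by simp
  qed
  have I1: "g e \<le> h e" if "e \<in> S - (P1 \<union> P2)" for e
  proof -
    from that have eE: "e \<in> E" and eR: "e \<notin> R" and eP: "e \<notin> P1" "e \<notin> P2" by (auto simp: S_def)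
    obtain a c where e: "e = {a, c}" "a \<noteq> c" using edge_form[OF sg eE] by blast
    have vu: "u \<in> e" if "v \<in> e"
    proof -
      obtain x where x: "e = {v, x}" using \<open>v \<in> e\<close> e by (auto simp: insert_commute)
      then have xn: "x \<in> nbr E v" using eE by (simp add: nbr_def)
      show ?thesis
      proof (rule ccontr)
        assume "u \<notin> e"
        then have "x \<noteq> u" using x by auto
        show False
        proof (cases "x \<in> Y")
          case True then show False using eR x by (auto simp: R_def)
        next
          case False
          then have "x \<in> C" using xn \<open>x \<noteq> u\<close> Ydef by (auto simp: C_def)
          then show False using eP x by (auto simp: P2_def)
        qed
      qed
    qed
    have ac: "c \<in> nbr E a" "a \<in> nbr E c" using eE e by (auto simp: nbr_def insert_commute)
    have "d a \<ge> 1" "d c \<ge> 1" using dpos ac by auto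
    then show ?thesis unfolding g_def h_def using vu e kpos a0
      by (intro powr_mono2) (auto simp: d_def)
  qed
  have "sum g E = sum g S + sum g R"
    using sum.subset_diff[OF RE fE] by (simp add: S_def)
  also have "sum g S = sum g (S - (P1 \<union> P2)) + sum g (P1 \<union> P2)"
    using P1S P2S fS by (intro sum.subset_diff) auto
  also have "sum g (P1 \<union> P2) = sum g P1 + sum g P2"
    using P12 P1S P2S fS by (intro sum.union_disjoint) (auto intro: finite_subset)
  also have "sum g P1 + sum g P2 = (\<Sum>z\<in>C. g {u, z} + g {v, z})"
    unfolding P1_def P2_def sum.distrib
    by (simp add: sum.reindex inj_on_subset[OF inj_dbl])
  also have "sum g R = (\<Sum>y\<in>Y. g {v, y})"
    unfolding R_def by (simp add: sum.reindex inj_on_subset[OF inj_dbl])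
  finally have L: "sum g E = sum g (S - (P1 \<union> P2)) + (\<Sum>z\<in>C. g {u, z} + g {v, z}) + (\<Sum>y\<in>Y. g {v, y})" .
  have "sum h E2 = sum h S + sum h R'"
    unfolding E2S using fS fR' SR' by (rule sum.union_disjoint)
  also have "sum h S = sum h (S - (P1 \<union> P2)) + sum h (P1 \<union> P2)"
    using P1S P2S fS by (intro sum.subset_diff) auto
  also have "sum h (P1 \<union> P2) = sum h P1 + sum h P2"
    using P12 P1S P2S fS by (intro sum.union_disjoint) (auto intro: finite_subset)
  also have "sum h P1 + sum h P2 = (\<Sum>z\<in>C. h {u, z} + h {v, z})"
    unfolding P1_def P2_def sum.distrib
    by (simp add: sum.reindex inj_on_subset[OF inj_dbl])
  also have "sum h R' = (\<Sum>y\<in>Y. h {u, y})"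
    unfolding R'_def by (simp add: sum.reindex inj_on_subset[OF inj_dbl])
  finally have L2: "sum h E2 = sum h (S - (P1 \<union> P2)) + (\<Sum>z\<in>C. h {u, z} + h {v, z}) + (\<Sum>y\<in>Y. h {u, y})" .
  have A1: "sum g (S - (P1 \<union> P2)) \<le> sum h (S - (P1 \<union> P2))" using I1 by (rule sum_mono)
  have A2: "(\<Sum>z\<in>C. g {u, z} + g {v, z}) \<le> (\<Sum>z\<in>C. h {u, z} + h {v, z})" using I2 by (rule sum_mono)
  have A3: "(\<Sum>y\<in>Y. g {v, y}) < (\<Sum>y\<in>Y. h {u, y})" by (rule sum_strict_mono[OF b(5) Yne I3])
  show ?thesis unfolding Pl1 Pl2 L L2 using A1 A2 A3 by linarith
qed

end

theorem corollary4:
  fixes \<alpha> :: real and V :: "'a set" and E :: "'a set set"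
  assumes "\<alpha> \<ge> 1"
    and "connected_graph V E"
    and "\<And>V' E' :: 'a set set. connected_graph V' E' \<Longrightarrow> card V' = card V \<Longrightarrow>
           card E' = card E \<Longrightarrow> platt \<alpha> E' \<le> platt \<alpha> E"
  shows "max_degree V E = card V - 1"
proof -
  have sg: "simple_graph V E" and Vne: "V \<noteq> {}" and conn: "\<And>a b. a \<in> V \<Longrightarrow> b \<in> V \<Longrightarrow> (adj E)\<^sup>*\<^sup>* a b"
    using assms(2) by (auto simp: connected_graph_def)
  have fV: "finite V" using sg by (simp add: simple_graph_def)
  have fD: "finite (degree E ` V)" "degree E ` V \<noteq> {}" using fV Vne by auto
  have le: "max_degree V E \<le> card V - 1"
    unfolding max_degree_def using fD deg_le[OF sg] by (intro Max.boundedI) auto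
  show ?thesis
  proof (rule ccontr)
    assume "max_degree V E \<noteq> card V - 1"
    with le have lt: "max_degree V E < card V - 1" by simp
    obtain u where uV: "u \<in> V" and du: "degree E u = max_degree V E"
      using Max_in[OF fD] unfolding max_degree_def by auto
    have maxd: "degree E x \<le> degree E u" if "x \<in> V" for x
      using Max_ge[OF fD(1)] that du unfolding max_degree_def by auto
    have fN: "finite (nbr E u)" using finite_nbr[OF sg] .
    have "card (insert u (nbr E u)) \<le> Suc (card (nbr E u))" using fN by (simp add: card_insert_if)
    also have "card (nbr E u) = degree E u" using deg_nbr[OF sg] by simp
    finally have cN: "card (insert u (nbr E u)) < card V" using lt du by linarith
    have "\<not> V \<subseteq> insert u (nbr E u)"
    proof
      assume "V \<subseteq> insert u (nbr E u)"
      then have "card V \<le> card (insert u (nbr E u))" using fN by (intro card_mono) auto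
      then show False using cN by simp
    qed
    then obtain w0 where w0: "w0 \<in> V" "w0 \<notin> insert u (nbr E u)" by blast
    from path_lemma[OF conn[OF uV w0(1)]] w0(2)
    obtain v w where vw: "v \<in> nbr E u" "w \<in> nbr E v" "w \<notin> insert u (nbr E u)" by blast
    define Y where "Y = nbr E v - insert u (nbr E u)"
    have Yne: "Y \<noteq> {}" using vw by (auto simp: Y_def)
    have vV: "v \<in> V" using vw(1) nbr_sub[OF sg] by blast
    interpret K: kel V E u v Y \<alpha>
      by unfold_locales (use sg uV vw(1) Yne maxd[OF vV] assms(1) in \<open>auto simp: Y_def\<close>)
    have c2: "connected_graph V K.E2"
      unfolding connected_graph_def using K.sg2 Vne K.conn_E2 conn by blast
    have "platt \<alpha> K.E2 \<le> platt \<alpha> E" using assms(3)[OF c2 refl K.card_E2] .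
    then show False using K.platt_E2 by simp
  qed
qed

end
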